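(* Assume $\tau_1\tau_2\|K\|^2\le1/2$ and $\tau_1\le1/(2L)$, and that $x_0\in[0,1]^n$ and $y_0\in\mathbb R_+^{m_1}\times\mathbb R^{m_2}$. Then for every $N\ge1$, \[\frac1{\tau_1}\sum_{k=1}^N\|x_k-x_{k-1}\|^2+\frac1{\tau_2}\sum_{k=1}^N\|y_k-y_{k-1}\|^2\le4\Delta\Phi_N+\frac8{\tau_1}\sum_{k=1}^N\|x_{k-1}\|^2+16\tau_2\|r\|^2N,\] where $\Delta\Phi_N:=\Phi(x_0,y_0)-\Phi(x_N,y_N)$.
   Context: Let $n,m_1,m_2$ be positive integers, $Q\in\mathbb R^{n\times n}$ symmetric, $c\in\mathbb R^n$, $A\in\mathbb R^{m_1\times n}$, $b\in\mathbb R^{m_1}$, $B\in\mathbb R^{m_2\times n}$, $d\in\mathbb R^{m_2}$. Let $K:=-\begin{pmatrix}A\\ B\end{pmatrix}$ and $r:=(b;d)$. Fix $\rho\ge0$ and let $\mathbf 1$ be the all-ones vector. Define $\hat{\mathcal L}(x,y):=\langle x,Qx\rangle+\langle c,x\rangle+\langle y,Kx+r\rangle+\rho\langle x,\mathbf 1-x\rangle$ (no convexity is assumed), with $\nabla_x\hat{\mathcal L}(x,y)=c+\rho\mathbf 1+K^\top y+2Qx-2\rho x$. Let $Y:=\mathbb R_+^{m_1}\times\mathbb R^{m_2}$, $h_1$ the indicator of $[0,1]^n$, $h_2$ the indicator of $Y$ ($0$ on the set, $+\infty$ outside), $\Phi(x,y):=\hat{\mathcal L}(x,y)+h_1(x)-h_2(y)$.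 $L:=2(\|Q\|+\rho)$, $\|\cdot\|$ the spectral norm on matrices and Euclidean norm on vectors. PDHG iterates with step sizes $\tau_1,\tau_2>0$: $x_{-1}:=x_0$, $\bar x_0:=x_0$, and for $k\ge1$: $y_k=\Pi_Y(y_{k-1}+\tau_2(K\bar x_{k-1}+r))$, $x_k=\Pi_{[0,1]^n}(x_{k-1}-\tau_1\nabla_x\hat{\mathcal L}(x_{k-1},y_k))$, $\bar x_k=2x_k-x_{k-1}$, with $\Pi$ the Euclidean projection. *)

theory Defs
  imports "HOL-Analysis.Analysis" "HOL-Library.Extended_Real"
begin

definition Kmat :: "real^'n^'m1 \<Rightarrow> real^'n^'m2 \<Rightarrow> real^'n^('m1 + 'm2)" where
  "Kmat A B = (\<chi> i. case i of Inl j \<Rightarrow> - (A $ j) | Inr j \<Rightarrow> - (B $ j))"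

definition rvec :: "real^'m1 \<Rightarrow> real^'m2 \<Rightarrow> real^('m1 + 'm2)" where
  "rvec b d = (\<chi> i. case i of Inl j \<Rightarrow> b $ j | Inr j \<Rightarrow> d $ j)"

definition Yset :: "(real^('m1::finite + 'm2::finite)) set" where
  "Yset = {y. \<forall>j. 0 \<le> y $ Inl j}"

definition Lhat :: "real^'n^'n \<Rightarrow> real^'n \<Rightarrow> real^'n^'m \<Rightarrow> real^'m \<Rightarrow> real
                    \<Rightarrow> real^'n \<Rightarrow> real^'m \<Rightarrow> real" where
  "Lhat Q c K r \<rho> x y = x \<bullet> (Q *v x) + c \<bullet> x + y \<bullet> (K *v x + r) + \<rho> * (x \<bullet> (vec 1 - x))"

definition gradx :: "real^'n^'n \<Rightarrow> real^'n \<Rightarrow> real^'n^'m \<Rightarrow> real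
                    \<Rightarrow> real^'n \<Rightarrow> real^'m \<Rightarrow> real^'n" where
  "gradx Q c K \<rho> x y = c + \<rho> *\<^sub>R vec 1 + transpose K *v y + 2 *\<^sub>R (Q *v x) - (2 * \<rho>) *\<^sub>R x"

definition ind :: "'a set \<Rightarrow> 'a \<Rightarrow> ereal" where
  "ind S z = (if z \<in> S then 0 else \<infinity>)"

definition Phi :: "real^'n^'n \<Rightarrow> real^'n \<Rightarrow> real^'n^('m1 + 'm2) \<Rightarrow> real^('m1::finite + 'm2::finite) \<Rightarrow> real
                    \<Rightarrow> real^'n \<Rightarrow> real^('m1 + 'm2) \<Rightarrow> ereal" where
  "Phi Q c K r \<rho> x y = ereal (Lhat Q c K r \<rho> x y) + ind (cbox 0 1) x - ind Yset y"

text \<open>PDHG state after k steps: (x_k, xbar_k, y_k).\<close>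
primrec pdhg :: "real^'n^'n \<Rightarrow> real^'n \<Rightarrow> real^'n^('m1 + 'm2) \<Rightarrow> real^('m1::finite + 'm2::finite) \<Rightarrow> real
                  \<Rightarrow> real \<Rightarrow> real \<Rightarrow> real^'n \<Rightarrow> real^('m1 + 'm2) \<Rightarrow> nat
                  \<Rightarrow> (real^'n) \<times> (real^'n) \<times> (real^('m1 + 'm2))" where
  "pdhg Q c K r \<rho> \<tau>1 \<tau>2 x0 y0 0 = (x0, x0, y0)"
| "pdhg Q c K r \<rho> \<tau>1 \<tau>2 x0 y0 (Suc k) =
     (let (x, xb, y) = pdhg Q c K r \<rho> \<tau>1 \<tau>2 x0 y0 k;
          y' = closest_point Yset (y + \<tau>2 *\<^sub>R (K *v xb + r));
          x' = closest_point (cbox 0 1) (x - \<tau>1 *\<^sub>R gradx Q c K \<rho> x y')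
      in (x', 2 *\<^sub>R x' - x, y'))"

end

theory Submission
  imports Defs
begin

lemma Lhat_x_diff:
  fixes Q :: "real^'n^'n" and K :: "real^'n^'m"
  assumes "transpose Q = Q"
  shows "Lhat Q c K r \<rho> (x + d) y - Lhat Q c K r \<rho> x y
    = gradx Q c K \<rho> x y \<bullet> d + d \<bullet> (Q *v d) - \<rho> * (d \<bullet> d)"
proof -
  have s: "d \<bullet> (Q *v x) = x \<bullet> (Q *v d)"
  proof -
    have "Q *v x = x v* Q" using vector_transpose_matrix[of x Q] assms by simp
    then show ?thesis by (metis inner_commute dot_lmul_matrix)
  qed
  have t: "(transpose K *v y) \<bullet> d = y \<bullet> (K *v d)"
    by (simp only: transpose_matrix_vector dot_lmul_matrix)
  have t2: "d \<bullet> (y v* K) = y \<bullet> (K *v d)"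
    by (metis inner_commute dot_lmul_matrix)
  show ?thesis
    unfolding Lhat_def gradx_def
    by (simp add: matrix_vector_right_distrib inner_add_left inner_add_right inner_diff_left
          inner_diff_right s t t2 algebra_simps inner_commute)
qed

lemma Lhat_y_diff:
  "Lhat Q c K r \<rho> x y' - Lhat Q c K r \<rho> x y = (y' - y) \<bullet> (K *v x + r)"
  unfolding Lhat_def by (simp add: inner_diff_left)

lemma norm3:
  fixes a b c :: "'a::real_inner"
  shows "(norm (a + b + c))\<^sup>2 \<le> 2 * (norm a)\<^sup>2 + 4 * (norm b)\<^sup>2 + 4 * (norm c)\<^sup>2"
proof -
  have "(norm (a + b + c))\<^sup>2 = 2 * (norm a)\<^sup>2 + 4 * (norm b)\<^sup>2 + 4 * (norm c)\<^sup>2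
     - (norm (a - b - c))\<^sup>2 - 2 * (norm (b - c))\<^sup>2"
    by (simp add: power2_norm_eq_inner inner_add_left inner_add_right inner_diff_left
          inner_diff_right inner_commute algebra_simps)
  then show ?thesis using zero_le_power2[of "norm (a-b-c)"] zero_le_power2[of "norm (b-c)"] by linarith
qed

lemma norm2:
  fixes a b :: "'a::real_inner"
  shows "(norm (a + b))\<^sup>2 \<le> 2 * (norm a)\<^sup>2 + 2 * (norm b)\<^sup>2"
proof -
  have "(norm (a + b))\<^sup>2 = 2 * (norm a)\<^sup>2 + 2 * (norm b)\<^sup>2 - (norm (a - b))\<^sup>2"
    by (simp add: power2_norm_eq_inner inner_add_left inner_add_right inner_diff_left
          inner_diff_right inner_commute algebra_simps)
  then show ?thesis by simp
qed

lemma closed_Yset: "closed (Yset :: (real^('m1::finite + 'm2::finite)) set)"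
proof -
  have "Yset = (\<Inter>j. {y :: real^('m1 + 'm2). 0 \<le> y $ Inl j})" unfolding Yset_def by auto
  moreover have "closed {y :: real^('m1 + 'm2). 0 \<le> y $ Inl j}" for j
    using closed_halfspace_component_ge_cart[of 0 "Inl j"] by simp
  then have "closed (\<Inter>j. {y :: real^('m1 + 'm2). 0 \<le> y $ Inl j})" by (intro closed_INT) auto
  ultimately show ?thesis by simp
qed

lemma convex_Yset: "convex (Yset :: (real^('m1::finite + 'm2::finite)) set)"
  unfolding Yset_def convex_def by (auto intro!: add_nonneg_nonneg mult_nonneg_nonneg)

lemma ne_Yset: "(0 :: real^('m1::finite + 'm2::finite)) \<in> Yset"
  unfolding Yset_def by auto

lemma lin_aux:
  fixes A E X R B gd dQd ew F F' Fm ra tw tkx tkD tv :: real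
  assumes "gd \<le> - A" "dQd \<le> A / 4" "ew \<le> tw + E / 4" "tw \<le> 2 * tkx + 2 * R"
   "E \<le> tv" "tv \<le> 2 * tkD + 4 * tkx + 4 * R" "tkx \<le> X / 2" "tkD \<le> B / 2"
   "0 \<le> ra" "F' - Fm = gd + dQd - ra" "Fm - F = ew"
  shows "A + E \<le> 4 * (F - F') + 8 * X + 16 * R + 2 * B - 2 * A"
proof -
  have 1: "F - F' \<ge> 3/4*A - ew" using assms by linarith
  have 2: "ew \<le> X + 2 * R + E/4" using assms by linarith
  have 3: "E \<le> B + 2 * X + 4 * R" using assms by linarith
  show ?thesis using 1 2 3 by (simp add: algebra_simps)
qed

lemma arith_step:
  fixes \<tau>1 \<tau>2 a bD xx e2 r2 kx kD w2 v2 gd dQd ew F Fm F' onQ \<rho> ne nw :: real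
  assumes t1: "\<tau>1 > 0" and t2: "\<tau>2 > 0"
    and h1: "\<tau>1 * gd + a \<le> 0" and h2: "F' - Fm = gd + dQd - \<rho> * a"
    and h3: "dQd \<le> onQ * a" and h4: "4 * onQ * \<tau>1 \<le> 1" and h5: "\<rho> \<ge> 0" and h6: "a \<ge> 0"
    and h7: "Fm - F = ew" and h8: "ew \<le> ne * nw" and h9: "e2 = ne\<^sup>2" and h10: "w2 = nw\<^sup>2"
    and h11: "w2 \<le> 2 * kx + 2 * r2" and h12: "ne \<le> \<tau>2 * nv" and h12b: "ne \<ge> 0" and h13: "v2 = nv\<^sup>2"
    and h14: "v2 \<le> 2 * kD + 4 * kx + 4 * r2"
    and h15: "\<tau>1 * \<tau>2 * kx \<le> xx / 2" and h16: "\<tau>1 * \<tau>2 * kD \<le> bD / 2"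
  shows "a / \<tau>1 + e2 / \<tau>2 \<le> 4 * (F - F') + 8 * (xx / \<tau>1) + 16 * (\<tau>2 * r2)
           + 2 * (bD / \<tau>1) - 2 * (a / \<tau>1)"
proof -
  have f1: "gd \<le> - (a / \<tau>1)" using h1 t1 by (simp add: field_simps)
  have "onQ \<le> 1 / (4 * \<tau>1)" using h4 t1 by (simp add: field_simps)
  then have "onQ * a \<le> 1 / (4 * \<tau>1) * a" using h6 by (rule mult_right_mono)
  then have f2: "dQd \<le> (a / \<tau>1) / 4" using h3 by simp
  have f3a: "ne * nw \<le> \<tau>2 * nw\<^sup>2 + ne\<^sup>2 / (4 * \<tau>2)"
  proof -
    have "ne * nw - (\<tau>2 * nw\<^sup>2 + ne\<^sup>2 / (4 * \<tau>2)) = - ((2 * \<tau>2 * nw - ne)\<^sup>2 / (4 * \<tau>2))"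
      using t2 by (simp add: field_simps power2_eq_square)
    moreover have "(2 * \<tau>2 * nw - ne)\<^sup>2 / (4 * \<tau>2) \<ge> 0" using t2 by simp
    ultimately show ?thesis by linarith
  qed
  have f3: "ew \<le> \<tau>2 * w2 + (e2 / \<tau>2) / 4" using f3a h8 h9 h10 by simp
  have f4: "\<tau>2 * w2 \<le> 2 * (\<tau>2 * kx) + 2 * (\<tau>2 * r2)"
    using mult_left_mono[OF h11, of \<tau>2] t2 by (simp add: algebra_simps)
  have f5: "e2 / \<tau>2 \<le> \<tau>2 * v2"
  proof -
    have "ne\<^sup>2 \<le> (\<tau>2 * nv)\<^sup>2" using h12 h12b by (rule power_mono)
    then have "e2 \<le> \<tau>2 * (\<tau>2 * v2)" using h9 h13 by (simp add: power2_eq_square algebra_simps)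
    then show ?thesis using t2 by (simp add: field_simps)
  qed
  have f6: "\<tau>2 * v2 \<le> 2 * (\<tau>2 * kD) + 4 * (\<tau>2 * kx) + 4 * (\<tau>2 * r2)"
    using mult_left_mono[OF h14, of \<tau>2] t2 by (simp add: algebra_simps)
  have f7: "\<tau>2 * kx \<le> (xx / \<tau>1) / 2" using h15 t1 by (simp add: field_simps)
  have f8: "\<tau>2 * kD \<le> (bD / \<tau>1) / 2" using h16 t1 by (simp add: field_simps)
  have f9: "\<rho> * a \<ge> 0" using h5 h6 by simp
  show ?thesis using lin_aux[OF f1 f2 f3 f4 f5 f6 f7 f8 f9 h2 h7] by simp
qed

theorem mainTheorem3:
  fixes Q :: "real^'n^'n" and c :: "real^'n"
    and A :: "real^'n^'m1" and b :: "real^'m1"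
    and B :: "real^'n^'m2" and d :: "real^'m2"
    and \<rho> \<tau>1 \<tau>2 :: real and x0 :: "real^'n" and y0 :: "real^('m1 + 'm2)" and N :: nat
  defines "K \<equiv> Kmat A B"
    and "r \<equiv> rvec b d"
    and "L \<equiv> 2 * (onorm (\<lambda>v. Q *v v) + \<rho>)"
    and "xs \<equiv> (\<lambda>k. fst (pdhg Q c (Kmat A B) (rvec b d) \<rho> \<tau>1 \<tau>2 x0 y0 k))"
    and "ys \<equiv> (\<lambda>k. snd (snd (pdhg Q c (Kmat A B) (rvec b d) \<rho> \<tau>1 \<tau>2 x0 y0 k)))"
  assumes "transpose Q = Q"
    and "\<rho> \<ge> 0" and "\<tau>1 > 0" and "\<tau>2 > 0"
    and "\<tau>1 * \<tau>2 * (onorm (\<lambda>v. K *v v))\<^sup>2 \<le> 1/2"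
    and "2 * L * \<tau>1 \<le> 1"
    and "x0 \<in> cbox 0 1" and "y0 \<in> Yset"
    and "N \<ge> 1"
  shows "ereal (1/\<tau>1 * (\<Sum>k=1..N. (norm (xs k - xs (k-1)))\<^sup>2)
              + 1/\<tau>2 * (\<Sum>k=1..N. (norm (ys k - ys (k-1)))\<^sup>2))
         \<le> 4 * (Phi Q c K r \<rho> x0 y0 - Phi Q c K r \<rho> (xs N) (ys N))
            + ereal (8/\<tau>1 * (\<Sum>k=1..N. (norm (xs (k-1)))\<^sup>2) + 16 * \<tau>2 * (norm r)\<^sup>2 * real N)"
proof -
  have TQ: "transpose Q = Q" by fact
  have KP: "bounded_linear (\<lambda>v. K *v v)" by simp
  have QP: "bounded_linear (\<lambda>v. Q *v v)" by simp
  define onQ where "onQ = onorm (\<lambda>v. Q *v v)"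
  define onK where "onK = onorm (\<lambda>v. K *v v)"
  define P where "P = pdhg Q c K r \<rho> \<tau>1 \<tau>2 x0 y0"
  define xb where "xb = (\<lambda>k. fst (snd (P k)))"
  have xsP: "xs k = fst (P k)" for k unfolding xs_def P_def K_def r_def by simp
  have ysP: "ys k = snd (snd (P k))" for k unfolding ys_def P_def K_def r_def by simp
  have recy: "ys (Suc k) = closest_point Yset (ys k + \<tau>2 *\<^sub>R (K *v xb k + r))" for k
    unfolding xsP ysP xb_def P_def by (cases "pdhg Q c K r \<rho> \<tau>1 \<tau>2 x0 y0 k") (simp add: Let_def)
  have recx: "xs (Suc k) = closest_point (cbox 0 1) (xs k - \<tau>1 *\<^sub>R gradx Q c K \<rho> (xs k) (ys (Suc k)))" for k
    unfolding xsP ysP xb_def P_def by (cases "pdhg Q c K r \<rho> \<tau>1 \<tau>2 x0 y0 k") (simp add: Let_def)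
  have recb: "xb (Suc k) = 2 *\<^sub>R xs (Suc k) - xs k" for k
    unfolding xsP ysP xb_def P_def by (cases "pdhg Q c K r \<rho> \<tau>1 \<tau>2 x0 y0 k") (simp add: Let_def)
  have xb0: "xb 0 = x0" and xs0: "xs 0 = x0" and ys0: "ys 0 = y0"
    unfolding xsP ysP xb_def P_def by simp_all
  have xbk: "xb k = xs k + (xs k - xs (k - 1))" for k
  proof (cases k)
    case 0 then show ?thesis using xb0 xs0 by simp
  next
    case (Suc i) then show ?thesis using recb[of i] by (simp add: scaleR_2 algebra_simps)
  qed
  have boxne: "cbox (0::real^'n) 1 \<noteq> {}" using assms(12) by auto
  have memx: "xs k \<in> cbox 0 1" for k
  proof (cases k)
    case 0 then show ?thesis using xs0 assms(12) by simp
  next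
    case (Suc i) then show ?thesis using recx[of i] closest_point_in_set[OF closed_cbox boxne] by simp
  qed
  have memy: "ys k \<in> Yset" for k
  proof (cases k)
    case 0 then show ?thesis using ys0 assms(13) by simp
  next
    case (Suc i) then show ?thesis using recy[of i] closest_point_in_set[OF closed_Yset] ne_Yset by auto
  qed
  define F where "F = (\<lambda>k. Lhat Q c K r \<rho> (xs k) (ys k))"
  have Kb: "\<tau>1 * \<tau>2 * (norm (K *v u))\<^sup>2 \<le> (norm u)\<^sup>2 / 2" for u
  proof -
    have "norm (K *v u) \<le> onK * norm u" using onorm[OF KP] onK_def by simp
    then have "(norm (K *v u))\<^sup>2 \<le> (onK * norm u)\<^sup>2" by (rule power_mono) simp
    then have "\<tau>1 * \<tau>2 * (norm (K *v u))\<^sup>2 \<le> \<tau>1 * \<tau>2 * (onK * norm u)\<^sup>2"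
      using assms(8,9) by (intro mult_left_mono) auto
    also have "\<dots> = (\<tau>1 * \<tau>2 * onK\<^sup>2) * (norm u)\<^sup>2" by (simp add: power_mult_distrib)
    also have "\<dots> \<le> 1/2 * (norm u)\<^sup>2" using assms(10) onK_def by (intro mult_right_mono) auto
    finally show ?thesis by simp
  qed
  have step: "(norm (xs (Suc j) - xs j))\<^sup>2 / \<tau>1 + (norm (ys (Suc j) - ys j))\<^sup>2 / \<tau>2
      \<le> 4 * (F j - F (Suc j)) + 8 * ((norm (xs j))\<^sup>2 / \<tau>1) + 16 * (\<tau>2 * (norm r)\<^sup>2)
        + 2 * ((norm (xs j - xs (j - 1)))\<^sup>2 / \<tau>1) - 2 * ((norm (xs (Suc j) - xs j))\<^sup>2 / \<tau>1)" for j
  proof -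
    define x where "x = xs j"
    define x' where "x' = xs (Suc j)"
    define y where "y = ys j"
    define y' where "y' = ys (Suc j)"
    define d where "d = x' - x"
    define D where "D = xs j - xs (j - 1)"
    define g where "g = gradx Q c K \<rho> x y'"
    define w where "w = K *v x + r"
    define v where "v = K *v D + K *v x + r"
    have vv: "K *v xb j + r = v" unfolding v_def xbk D_def x_def
      by (simp only: matrix_vector_right_distrib add.commute)
    have h1: "\<tau>1 * (g \<bullet> d) + (norm d)\<^sup>2 \<le> 0"
    proof -
      have "inner ((x - \<tau>1 *\<^sub>R g) - x') (x - x') \<le> 0"
        unfolding x'_def recx g_def x_def y'_def
        by (rule closest_point_dot[OF convex_box(1) closed_cbox memx])
      then show ?thesis unfolding d_def
        by (simp add: power2_norm_eq_inner inner_diff_left inner_diff_right inner_commute algebra_simps)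
    qed
    have h2: "F (Suc j) - Lhat Q c K r \<rho> x y' = g \<bullet> d + d \<bullet> (Q *v d) - \<rho> * (norm d)\<^sup>2"
      using Lhat_x_diff[OF TQ, of c K r \<rho> x d y'] unfolding F_def g_def d_def x'_def y'_def
      by (simp add: power2_norm_eq_inner)
    have h3: "d \<bullet> (Q *v d) \<le> onQ * (norm d)\<^sup>2"
    proof -
      have "d \<bullet> (Q *v d) \<le> norm d * norm (Q *v d)" by (rule norm_cauchy_schwarz)
      also have "\<dots> \<le> norm d * (onQ * norm d)"
        using onorm[OF QP] onQ_def by (simp add: mult_left_mono)
      finally show ?thesis by (simp add: power2_eq_square algebra_simps)
    qed
    have h4: "4 * onQ * \<tau>1 \<le> 1"
    proof -
      have "4 * onQ \<le> 2 * L" unfolding L_def onQ_def using assms(7) by simp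
      then have "4 * onQ * \<tau>1 \<le> 2 * L * \<tau>1" using assms(8) by (intro mult_right_mono) auto
      then show ?thesis using assms(11) by linarith
    qed
    have h7: "Lhat Q c K r \<rho> x y' - F j = (y' - y) \<bullet> w"
      unfolding F_def w_def x_def y_def by (rule Lhat_y_diff)
    have h8: "(y' - y) \<bullet> w \<le> norm (y' - y) * norm w" by (rule norm_cauchy_schwarz)
    have h11: "(norm w)\<^sup>2 \<le> 2 * (norm (K *v x))\<^sup>2 + 2 * (norm r)\<^sup>2" unfolding w_def by (rule norm2)
    have h12: "norm (y' - y) \<le> \<tau>2 * norm v"
    proof -
      have "y = closest_point Yset y" using closest_point_self[OF memy] y_def by simp
      then have "norm (y' - y) \<le> dist (ys j + \<tau>2 *\<^sub>R (K *v xb j + r)) y"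
        unfolding y'_def recy y_def
        by (metis closest_point_lipschitz[OF convex_Yset closed_Yset] dist_norm ne_Yset empty_iff)
      also have "\<dots> = \<tau>2 * norm v" using assms(9) vv y_def by (simp add: dist_norm)
      finally show ?thesis .
    qed
    have h14: "(norm v)\<^sup>2 \<le> 2 * (norm (K *v D))\<^sup>2 + 4 * (norm (K *v x))\<^sup>2 + 4 * (norm r)\<^sup>2"
      unfolding v_def by (rule norm3)
    have A: "(norm d)\<^sup>2 / \<tau>1 + (norm (y' - y))\<^sup>2 / \<tau>2 \<le> 4 * (F j - F (Suc j)) + 8 * ((norm x)\<^sup>2 / \<tau>1)
        + 16 * (\<tau>2 * (norm r)\<^sup>2) + 2 * ((norm D)\<^sup>2 / \<tau>1) - 2 * ((norm d)\<^sup>2 / \<tau>1)"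
      by (rule arith_step[OF assms(8) assms(9) h1 h2 h3 h4 assms(7) zero_le_power2 h7 h8 refl refl
            h11 h12 norm_ge_zero refl h14 Kb Kb])
    show ?thesis using A unfolding d_def x'_def x_def y'_def y_def D_def .
  qed
  have ind: "1/\<tau>1 * (\<Sum>k=1..n. (norm (xs k - xs (k-1)))\<^sup>2) + 1/\<tau>2 * (\<Sum>k=1..n. (norm (ys k - ys (k-1)))\<^sup>2)
     \<le> 4 * (F 0 - F n) + (8/\<tau>1 * (\<Sum>k=1..n. (norm (xs (k-1)))\<^sup>2) + 16 * \<tau>2 * (norm r)\<^sup>2 * real n)
       - 2 * ((norm (xs n - xs (n - 1)))\<^sup>2 / \<tau>1)" for n
  proof (induction n)
    case 0 then show ?case by simp
  next
    case (Suc n)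
    have e: "1/\<tau>1 * (\<Sum>k=1..Suc n. (norm (xs k - xs (k-1)))\<^sup>2) =
       1/\<tau>1 * (\<Sum>k=1..n. (norm (xs k - xs (k-1)))\<^sup>2) + (norm (xs (Suc n) - xs n))\<^sup>2 / \<tau>1"
      by (simp add: sum.cl_ivl_Suc ring_distribs)
    have e2: "1/\<tau>2 * (\<Sum>k=1..Suc n. (norm (ys k - ys (k-1)))\<^sup>2) =
       1/\<tau>2 * (\<Sum>k=1..n. (norm (ys k - ys (k-1)))\<^sup>2) + (norm (ys (Suc n) - ys n))\<^sup>2 / \<tau>2"
      by (simp add: sum.cl_ivl_Suc ring_distribs)
    have e3: "8/\<tau>1 * (\<Sum>k=1..Suc n. (norm (xs (k-1)))\<^sup>2) =
       8/\<tau>1 * (\<Sum>k=1..n. (norm (xs (k-1)))\<^sup>2) + 8 * ((norm (xs n))\<^sup>2 / \<tau>1)"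
      by (simp add: sum.cl_ivl_Suc ring_distribs)
    have e4: "16 * \<tau>2 * (norm r)\<^sup>2 * real (Suc n) = 16 * \<tau>2 * (norm r)\<^sup>2 * real n + 16 * (\<tau>2 * (norm r)\<^sup>2)"
      by (simp add: ring_distribs)
    show ?case unfolding e e2 e3 e4 using Suc.IH step[of n] by simp
  qed
  have fin: "Phi Q c K r \<rho> (xs k) (ys k) = ereal (F k)" for k
    unfolding Phi_def F_def ind_def using memx[of k] memy[of k] by simp
  have "1/\<tau>1 * (\<Sum>k=1..N. (norm (xs k - xs (k-1)))\<^sup>2) + 1/\<tau>2 * (\<Sum>k=1..N. (norm (ys k - ys (k-1)))\<^sup>2)
     \<le> 4 * (F 0 - F N) + (8/\<tau>1 * (\<Sum>k=1..N. (norm (xs (k-1)))\<^sup>2) + 16 * \<tau>2 * (norm r)\<^sup>2 * real N)"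
    using ind[of N] assms(8) by (smt (verit) divide_nonneg_pos zero_le_power2)
  then show ?thesis using fin[of 0] fin[of N] xs0 ys0 by simp
qed

end
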